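(* There is no finite group $G$ with $\pi_e(G)\subseteq\{1,2,3,4,6\}$ having precisely four cyclic subgroups $H_1,H_2,H_3,H_4$ of order $6$ such that $|H_1\cap H_2|=3$ and $|H_3\cap H_4|=3$.
   Context: $\pi_e(G)$ is the set of orders of elements of $G$. *)

theory Defs
  imports "HOL-Algebra.Multiplicative_Group" "HOL-Algebra.Generated_Groups"
begin

definition element_orders :: "('a, 'b) monoid_scheme \<Rightarrow> nat set" where
  "element_orders G = {group.ord G x | x. x \<in> carrier G}"

definition cyclic_subgroup :: "('a, 'b) monoid_scheme \<Rightarrow> 'a set \<Rightarrow> bool" where
  "cyclic_subgroup G H \<longleftrightarrow> (\<exists>x \<in> carrier G. H = generate G {x})"

end

theory Submission
  imports Defs
begin


lemma even_card_fpf: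
  assumes "finite A" "\<And>x. x \<in> A \<Longrightarrow> f x \<in> A" "\<And>x. x \<in> A \<Longrightarrow> f (f x) = x"
    "\<And>x. x \<in> A \<Longrightarrow> f x \<noteq> x"
  shows "even (card A)"
  using assms
proof (induction "card A" arbitrary: A rule: less_induct)
  case less
  show ?case
  proof (cases "A = {}")
    case True then show ?thesis by simp
  next
    case False
    then obtain x where x: "x \<in> A" by blast
    define B where "B = A - {x, f x}"
    have fx: "f x \<in> A" "f x \<noteq> x" using less x by auto
    have cB: "card B = card A - 2" unfolding B_def using less(2) x fx
      by (simp add: card_Diff_subset)
    have cA: "card A \<ge> 2"
    proof -
      have "card {x, f x} = 2" using fx by simp
      moreover have "card {x, f x} \<le> card A" using less(2) x fx by (intro card_mono) auto
      ultimately show ?thesis by simp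
    qed
    have "even (card B)"
    proof (rule less(1))
      show "card B < card A" using cB cA by simp
      show "finite B" using less(2) B_def by simp
      fix y assume y: "y \<in> B"
      have yA: "y \<in> A" "y \<noteq> x" "y \<noteq> f x" using y B_def by auto
      have n1: "f y \<noteq> x"
      proof
        assume "f y = x" then have "f x = y" using less(4)[OF yA(1)] by simp
        with yA show False by simp
      qed
      have n2: "f y \<noteq> f x"
      proof
        assume "f y = f x" then have "f (f y) = f (f x)" by simp
        then have "y = x" using less(4)[OF yA(1)] less(4)[OF x] by simp
        with yA show False by simp
      qed
      show "f y \<in> B" unfolding B_def using less(3)[OF yA(1)] n1 n2 by simp
      show "f (f y) = y" using y less(4) B_def by auto
      show "f y \<noteq> y" using y less(5) B_def by auto
    qed
    then show ?thesis using cB cA by (simp add: even_diff_nat)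
  qed
qed


context group begin

lemma gen6_elem:
  assumes "y \<in> carrier G" "ord y = 6" "k \<in> generate G {y}"
  shows "\<exists>i::nat<6. k = y [^] i"
proof -
  have "k \<in> {y[^]x | x. x \<in> {0 .. ord y - 1}}"
    using generate_pow_nat[OF assms(1)] ord_elems_inf_carrier[OF assms(1)] assms by auto
  then obtain x where "x \<in> {0 .. ord y - 1}" "k = y [^] x" by blast
  then show ?thesis using assms(2) by (intro exI[of _ x]) auto
qed

lemma sub_nat_pow_closed: "subgroup H G \<Longrightarrow> h \<in> H \<Longrightarrow> h [^] (n::nat) \<in> H"
  by (metis int_pow_int subgroup_int_pow_closed)

lemma gen6_in: "y \<in> carrier G \<Longrightarrow> y [^] (i::nat) \<in> generate G {y}"
  by (meson empty_subsetI generate.incl generate_is_subgroup insert_subset singletonI sub_nat_pow_closed)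

lemma pow6_eq1: "y \<in> carrier G \<Longrightarrow> ord y = 6 \<Longrightarrow> y [^] (i::nat) = \<one> \<longleftrightarrow> 6 dvd i"
  by (simp add: pow_eq_id)

lemma pow6_inj: assumes "y \<in> carrier G" "ord y = 6" "i < 6" "j < 6" "y [^] (i::nat) = y [^] (j::nat)"
  shows "i = j"
  using ord_inj[OF assms(1)] assms unfolding inj_on_def by auto

lemma gen6_S:
  assumes "y \<in> carrier G" "ord y = 6"
  shows "{h \<in> generate G {y}. h [^] (3::nat) = \<one>} = {\<one>, y[^](2::nat), y[^](4::nat)}"
    and "card {h \<in> generate G {y}. h [^] (3::nat) = \<one>} = 3"
proof -
  show S: "{h \<in> generate G {y}. h [^] (3::nat) = \<one>} = {\<one>, y[^](2::nat), y[^](4::nat)}"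
  proof
    show "{h \<in> generate G {y}. h [^] (3::nat) = \<one>} \<subseteq> {\<one>, y[^](2::nat), y[^](4::nat)}"
    proof
      fix h assume h: "h \<in> {h \<in> generate G {y}. h [^] (3::nat) = \<one>}"
      then obtain i :: nat where i: "i < 6" "h = y [^] i" using gen6_elem assms by blast
      have "y [^] (i*3) = \<one>" using h i assms by (simp add: nat_pow_pow)
      then have "6 dvd i*3" using pow6_eq1 assms by blast
      then have "i = 0 \<or> i = 2 \<or> i = 4" using i(1) by presburger
      then show "h \<in> {\<one>, y[^](2::nat), y[^](4::nat)}" using i by auto
    qed
    show "{\<one>, y[^](2::nat), y[^](4::nat)} \<subseteq> {h \<in> generate G {y}. h [^] (3::nat) = \<one>}"
    proof -
      have "(y[^](2::nat)) [^] (3::nat) = \<one>" "(y[^](4::nat)) [^] (3::nat) = \<one>"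
        using assms by (simp_all add: nat_pow_pow pow6_eq1)
      moreover have "\<one> \<in> generate G {y}" "y[^](2::nat) \<in> generate G {y}" "y[^](4::nat) \<in> generate G {y}"
        using gen6_in[OF assms(1), of 0] gen6_in[OF assms(1), of 2] gen6_in[OF assms(1), of 4] by auto
      ultimately show ?thesis by auto
    qed
  qed
  have "\<one> \<noteq> y[^](2::nat)" "\<one> \<noteq> y[^](4::nat)" "y[^](2::nat) \<noteq> y[^](4::nat)"
  proof -
    have "y[^](2::nat) \<noteq> \<one>" using pow6_eq1[OF assms, of 2] by simp
    moreover have "y[^](4::nat) \<noteq> \<one>" using pow6_eq1[OF assms, of 4] by simp
    moreover have "y[^](2::nat) \<noteq> y[^](4::nat)" using pow6_inj[OF assms, of 2 4] by auto
    ultimately show "\<one> \<noteq> y[^](2::nat)" "\<one> \<noteq> y[^](4::nat)" "y[^](2::nat) \<noteq> y[^](4::nat)" by auto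
  qed
  then show "card {h \<in> generate G {y}. h [^] (3::nat) = \<one>} = 3" unfolding S by simp
qed

lemma gen6_inv:
  assumes "y \<in> carrier G" "ord y = 6" "h \<in> generate G {y}" "h \<otimes> h = \<one>" "h \<noteq> \<one>"
  shows "h = y [^] (3::nat)"
proof -
  obtain i :: nat where i: "i < 6" "h = y [^] i" using gen6_elem assms by blast
  have "y [^] (i+i) = \<one>" using assms i by (simp add: nat_pow_mult)
  then have "6 dvd i+i" using pow6_eq1 assms by blast
  then have "i = 0 \<or> i = 3" using i(1) by presburger
  then show ?thesis using i assms by auto
qed

lemma ta_props:
  assumes t: "t \<in> carrier G" "t \<otimes> t = \<one>" "t \<noteq> \<one>"
    and a: "a \<in> carrier G" "a [^] (3::nat) = \<one>" "a \<noteq> \<one>" and c: "t \<otimes> a = a \<otimes> t"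
  shows "ord (t \<otimes> a) = 6" "(t \<otimes> a) [^] (3::nat) = t" "(t \<otimes> a) [^] (4::nat) = a"
proof -
  have pw: "(t \<otimes> a) [^] n = t [^] n \<otimes> a [^] n" for n :: nat using pow_mult_distrib[OF c t(1) a(1)] .
  have t2: "t [^] (2::nat) = \<one>"
    using t by (simp add: numeral_2_eq_2)
  have t4: "t [^] (4::nat) = \<one>"
  proof -
    have "t [^] (4::nat) = (t [^] (2::nat)) [^] (2::nat)" using nat_pow_pow[OF t(1), of 2 2] by simp
    then show ?thesis using t2 by simp
  qed
  have t6: "t [^] (6::nat) = \<one>"
  proof -
    have "t [^] (6::nat) = (t [^] (2::nat)) [^] (3::nat)" using nat_pow_pow[OF t(1), of 2 3] by simp
    then show ?thesis using t2 by simp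
  qed
  have t3: "t [^] (3::nat) = t"
  proof -
    have "t [^] (3::nat) = t [^] (2::nat) \<otimes> t [^] (1::nat)" using nat_pow_mult[OF t(1), of 2 1] by simp
    then show ?thesis using t2 t by simp
  qed
  have a6: "a [^] (6::nat) = \<one>"
  proof -
    have "a [^] (6::nat) = (a [^] (3::nat)) [^] (2::nat)" using nat_pow_pow[OF a(1), of 3 2] by simp
    then show ?thesis using a by simp
  qed
  have a4: "a [^] (4::nat) = a"
  proof -
    have "a [^] (4::nat) = a [^] (3::nat) \<otimes> a [^] (1::nat)" using nat_pow_mult[OF a(1), of 3 1] by simp
    then show ?thesis using a by simp
  qed
  have a2: "a [^] (2::nat) \<noteq> \<one>"
  proof
    assume h: "a [^] (2::nat) = \<one>"
    have "a [^] (3::nat) = a [^] (2::nat) \<otimes> a [^] (1::nat)" using nat_pow_mult[OF a(1), of 2 1] by simp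
    then have "a [^] (3::nat) = a" using h a by simp
    then show False using a by simp
  qed
  show "(t \<otimes> a) [^] (3::nat) = t" using pw[of 3] t3 a t by simp
  show "(t \<otimes> a) [^] (4::nat) = a" using pw[of 4] a4 t4 a by simp
  have ta: "t \<otimes> a \<in> carrier G" using t a by simp
  have "(t \<otimes> a) [^] (6::nat) = \<one>" using pw[of 6] t6 a6 by simp
  then have d6: "ord (t \<otimes> a) dvd 6" using pow_eq_id[OF ta] by simp
  have "(t \<otimes> a) [^] (2::nat) \<noteq> \<one>" using pw[of 2] t2 a2 a by simp
  then have n2: "\<not> ord (t \<otimes> a) dvd 2" using pow_eq_id[OF ta] by simp
  have "(t \<otimes> a) [^] (3::nat) \<noteq> \<one>" using pw[of 3] t3 a t by simp
  then have n3: "\<not> ord (t \<otimes> a) dvd 3" using pow_eq_id[OF ta] by simp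
  have "ord (t \<otimes> a) \<in> {d. d dvd (6::nat)}" using d6 by simp
  moreover have "{d. d dvd (6::nat)} = {1,2,3,6}"
  proof -
    have "{d. d dvd (6::nat)} \<subseteq> {1,2,3,6}"
    proof
      fix d assume "d \<in> {d. d dvd (6::nat)}"
      then have "d dvd 6" by simp
      then have "d \<le> 6" by (simp add: dvd_imp_le)
      have "d \<noteq> 0" using \<open>d dvd 6\<close> by (metis dvd_0_left_iff zero_neq_numeral)
      note \<open>d \<le> 6\<close>
      then have "d = 1 \<or> d = 2 \<or> d = 3 \<or> d = 4 \<or> d = 5 \<or> d = 6" using \<open>d \<noteq> 0\<close> by arith
      then show "d \<in> {1,2,3,6}" using \<open>d dvd 6\<close> by auto
    qed
    then show ?thesis by auto
  qed
  ultimately show "ord (t \<otimes> a) = 6" using n2 n3 by auto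
qed

lemma sub3:
  assumes "subgroup K G" "card K = 3" "k \<in> K"
  shows "k [^] (3::nat) = \<one>"
proof -
  interpret K: group "G\<lparr>carrier := K\<rparr>" using subgroup_imp_group[OF assms(1)] .
  have "k [^]\<^bsub>G\<lparr>carrier := K\<rparr>\<^esub> order (G\<lparr>carrier := K\<rparr>) = \<one>\<^bsub>G\<lparr>carrier := K\<rparr>\<^esub>"
    using K.pow_order_eq_1 assms(3) by simp
  then show ?thesis using assms(2) by (simp add: order_def flip: nat_pow_consistent)
qed

lemma inter3:
  assumes "y \<in> carrier G" "ord y = 6" "y' \<in> carrier G"
    and "card (generate G {y} \<inter> generate G {y'}) = 3"
  shows "generate G {y} \<inter> generate G {y'} = {h \<in> generate G {y}. h [^] (3::nat) = \<one>}"
proof (rule card_subset_eq)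
  have sg: "subgroup (generate G {y} \<inter> generate G {y'}) G"
    using assms by (intro subgroups_Inter_pair generate_is_subgroup) auto
  show "finite {h \<in> generate G {y}. h [^] (3::nat) = \<one>}"
    using gen6_S(2)[OF assms(1,2)] by (intro card_ge_0_finite) simp
  show "generate G {y} \<inter> generate G {y'} \<subseteq> {h \<in> generate G {y}. h [^] (3::nat) = \<one>}"
    using sub3[OF sg assms(4)] by auto
  show "card (generate G {y} \<inter> generate G {y'}) = card {h \<in> generate G {y}. h [^] (3::nat) = \<one>}"
    using assms(4) gen6_S(2)[OF assms(1,2)] by simp
qed

lemma gen6_eq:
  assumes y: "y \<in> carrier G" "ord y = 6" and a: "a \<in> generate G {y}" "a [^] (3::nat) = \<one>" "a \<noteq> \<one>"
  shows "y [^] (3::nat) \<in> carrier G" "y [^] (3::nat) \<otimes> y [^] (3::nat) = \<one>" "y [^] (3::nat) \<noteq> \<one>"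
    "y [^] (3::nat) \<otimes> a = a \<otimes> y [^] (3::nat)"
    "generate G {y} = generate G {y [^] (3::nat) \<otimes> a}"
proof -
  obtain i :: nat where i: "i < 6" "a = y [^] i" using gen6_elem y a by blast
  show t: "y [^] (3::nat) \<in> carrier G" using y by simp
  show tt: "y [^] (3::nat) \<otimes> y [^] (3::nat) = \<one>" using y by (simp add: nat_pow_mult pow6_eq1)
  show tn: "y [^] (3::nat) \<noteq> \<one>" using y by (simp add: pow6_eq1)
  show c: "y [^] (3::nat) \<otimes> a = a \<otimes> y [^] (3::nat)" using y i by (simp add: nat_pow_mult add.commute)
  have ac: "a \<in> carrier G" using i y by simp
  have o: "ord (y [^] (3::nat) \<otimes> a) = 6" using ta_props(1)[OF t tt tn ac a(2,3) c] .
  have sg: "subgroup (generate G {y}) G" using y by (intro generate_is_subgroup) auto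
  have tin: "y [^] (3::nat) \<in> generate G {y}" using gen6_in y by blast
  have sub: "generate G {y [^] (3::nat) \<otimes> a} \<subseteq> generate G {y}"
    using generate_subgroup_incl[OF _ sg] subgroup.m_closed[OF sg tin a(1)] by blast
  have c1: "card (generate G {y}) = 6" using generate_pow_card y by simp
  have c2: "card (generate G {y [^] (3::nat) \<otimes> a}) = 6" using generate_pow_card[of "y [^] (3::nat) \<otimes> a"] o t ac by simp
  show "generate G {y} = generate G {y [^] (3::nat) \<otimes> a}"
  proof -
    have fin: "finite (generate G {y})" using c1 by (intro card_ge_0_finite) simp
    show ?thesis using card_subset_eq[OF fin sub] c1 c2 by simp
  qed
qed

end


context group begin

lemma cyc6_iff:
  "cyclic_subgroup G H \<and> card H = 6 \<longleftrightarrow> (\<exists>y\<in>carrier G. ord y = 6 \<and> H = generate G {y})"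
  unfolding cyclic_subgroup_def using generate_pow_card by auto

lemma main_false:
  assumes fin: "finite (carrier G)"
    and Hs: "{H. cyclic_subgroup G H \<and> card H = 6} = {H1, H2, H3, H4}"
    and c4: "card {H1, H2, H3, H4} = 4"
    and c12: "card (H1 \<inter> H2) = 3" and c34: "card (H3 \<inter> H4) = 3"
  shows False
proof -
  have memH: "\<exists>y\<in>carrier G. ord y = 6 \<and> H = generate G {y}" if "H \<in> {H1, H2, H3, H4}" for H
  proof -
    have "H \<in> {H. cyclic_subgroup G H \<and> card H = 6}" using that Hs by simp
    then show ?thesis using cyc6_iff by simp
  qed
  obtain y1 where y1: "y1 \<in> carrier G" "ord y1 = 6" "H1 = generate G {y1}" using memH[of H1] by auto
  obtain y2 where y2: "y2 \<in> carrier G" "ord y2 = 6" "H2 = generate G {y2}" using memH[of H2] by auto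
  obtain y3 where y3: "y3 \<in> carrier G" "ord y3 = 6" "H3 = generate G {y3}" using memH[of H3] by auto
  obtain y4 where y4: "y4 \<in> carrier G" "ord y4 = 6" "H4 = generate G {y4}" using memH[of H4] by auto
  have dist: "H1 \<noteq> H2" "H1 \<noteq> H3" "H1 \<noteq> H4" "H2 \<noteq> H3" "H2 \<noteq> H4" "H3 \<noteq> H4"
    using c4 by (auto simp: card_insert_if split: if_splits)
  define a where "a = y1 [^] (2::nat)"
  have S1: "H1 \<inter> H2 = {h \<in> H1. h [^] (3::nat) = \<one>}"
    using inter3[OF y1(1,2) y2(1)] c12 y1 y2 by simp
  have aS: "a \<in> {h \<in> H1. h [^] (3::nat) = \<one>}" using gen6_S(1)[OF y1(1,2)] y1(3) a_def by simp
  have aH1: "a \<in> H1" and aH2: "a \<in> H2" and a3: "a [^] (3::nat) = \<one>" using aS S1 by auto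
  have ac: "a \<in> carrier G" using a_def y1 by simp
  have a1: "a \<noteq> \<one>" using a_def pow6_eq1[OF y1(1,2), of 2] by simp
  have S3: "H3 \<inter> H4 = {h \<in> H3. h [^] (3::nat) = \<one>}"
    using inter3[OF y3(1,2) y4(1)] c34 y3 y4 by simp
  have S4: "H3 \<inter> H4 = {h \<in> H4. h [^] (3::nat) = \<one>}"
    using inter3[OF y4(1,2) y3(1)] c34 y3 y4 by (simp add: Int_commute)
  have a34: "a \<in> H3 \<longleftrightarrow> a \<in> H4" using S3 S4 a3 by blast
  define X where "X = {H. cyclic_subgroup G H \<and> card H = 6 \<and> a \<in> H}"
  have X_eq: "X = {H \<in> {H1, H2, H3, H4}. a \<in> H}" unfolding X_def using Hs by blast
  have evX: "even (card X)"
  proof (cases "a \<in> H3")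
    case True
    then have "X = {H1, H2, H3, H4}" using X_eq a34 aH1 aH2 by auto
    then show ?thesis using c4 by simp
  next
    case False
    then have "X = {H1, H2}" using X_eq a34 aH1 aH2 by auto
    then show ?thesis using dist by simp
  qed
  define I where "I = {t \<in> carrier G. t \<otimes> t = \<one> \<and> t \<noteq> \<one> \<and> t \<otimes> a = a \<otimes> t}"
  define \<phi> where "\<phi> = (\<lambda>t. generate G {t \<otimes> a})"
  have XI: "X = \<phi> ` I"
  proof
    show "X \<subseteq> \<phi> ` I"
    proof
      fix H assume "H \<in> X"
      then obtain y where y: "y \<in> carrier G" "ord y = 6" "H = generate G {y}" "a \<in> H"
        unfolding X_def using cyc6_iff by blast
      note e = gen6_eq[OF y(1,2) _ a3 a1]
      have "y [^] (3::nat) \<in> I" unfolding I_def using e y by blast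
      moreover have "H = \<phi> (y [^] (3::nat))" unfolding \<phi>_def using e y by blast
      ultimately show "H \<in> \<phi> ` I" by blast
    qed
    show "\<phi> ` I \<subseteq> X"
    proof
      fix H assume "H \<in> \<phi> ` I"
      then obtain t where t: "t \<in> I" "H = generate G {t \<otimes> a}" unfolding \<phi>_def by blast
      have tt: "t \<in> carrier G" "t \<otimes> t = \<one>" "t \<noteq> \<one>" "t \<otimes> a = a \<otimes> t" using t(1) I_def by auto
      note p = ta_props[OF tt(1-3) ac a3 a1 tt(4)]
      have tac: "t \<otimes> a \<in> carrier G" using tt ac by simp
      have "cyclic_subgroup G H \<and> card H = 6" using cyc6_iff tac p(1) t(2) by blast
      moreover have "a \<in> H" using gen6_in[OF tac, of 4] p(3) t(2) by simp
      ultimately show "H \<in> X" unfolding X_def by blast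
    qed
  qed
  have injI: "inj_on \<phi> I"
  proof
    fix t s assume t: "t \<in> I" and s: "s \<in> I" and e: "\<phi> t = \<phi> s"
    have tt: "t \<in> carrier G" "t \<otimes> t = \<one>" "t \<noteq> \<one>" "t \<otimes> a = a \<otimes> t" using t I_def by auto
    have ss: "s \<in> carrier G" "s \<otimes> s = \<one>" "s \<noteq> \<one>" "s \<otimes> a = a \<otimes> s" using s I_def by auto
    note pt = ta_props[OF tt(1-3) ac a3 a1 tt(4)]
    note ps = ta_props[OF ss(1-3) ac a3 a1 ss(4)]
    have tac: "t \<otimes> a \<in> carrier G" "s \<otimes> a \<in> carrier G" using tt ss ac by auto
    have "t \<in> generate G {t \<otimes> a}" using gen6_in[OF tac(1), of 3] pt(2) by simp
    then have "t \<in> generate G {s \<otimes> a}" using e \<phi>_def by simp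
    then have "t = (s \<otimes> a) [^] (3::nat)" using gen6_inv[OF tac(2) ps(1)] tt by blast
    then show "t = s" using ps(2) by simp
  qed
  have cIX: "card I = card X" using XI injI card_image by metis
  have "I \<noteq> {}" using XI X_eq aH1 by auto
  then obtain t0 where t0: "t0 \<in> I" by blast
  have t0p: "t0 \<in> carrier G" "t0 \<otimes> t0 = \<one>" "t0 \<noteq> \<one>" "t0 \<otimes> a = a \<otimes> t0" using t0 I_def by auto
  define C where "C = {x \<in> carrier G. x \<otimes> a = a \<otimes> x}"
  have finC: "finite C" using fin C_def by simp
  have evC: "even (card C)"
  proof (rule even_card_fpf[OF finC, of "\<lambda>x. x \<otimes> t0"])
    fix x assume x: "x \<in> C"
    then have xc: "x \<in> carrier G" "x \<otimes> a = a \<otimes> x" using C_def by auto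
    have "x \<otimes> t0 \<otimes> a = x \<otimes> (t0 \<otimes> a)" using xc t0p ac by (simp add: m_assoc)
    also have "\<dots> = x \<otimes> (a \<otimes> t0)" using t0p by simp
    also have "\<dots> = x \<otimes> a \<otimes> t0" by (rule m_assoc[OF xc(1) ac t0p(1), symmetric])
    also have "\<dots> = a \<otimes> x \<otimes> t0" using xc by simp
    also have "\<dots> = a \<otimes> (x \<otimes> t0)" by (rule m_assoc[OF ac xc(1) t0p(1)])
    finally show "x \<otimes> t0 \<in> C" using C_def xc t0p by simp
    show "x \<otimes> t0 \<otimes> t0 = x" using xc t0p by (simp add: m_assoc)
    show "x \<otimes> t0 \<noteq> x"
    proof
      assume "x \<otimes> t0 = x"
      then have "t0 = \<one>" using xc t0p l_cancel_one by blast
      then show False using t0p by simp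
    qed
  qed
  define F where "F = {x \<in> C. x \<otimes> x = \<one>}"
  have FI: "F = insert \<one> I" unfolding F_def C_def I_def using ac by auto
  have cF: "card F = Suc (card I)" using FI I_def finite_subset[OF _ fin, of I] by (auto simp: I_def)
  have evCF: "even (card (C - F))"
  proof (rule even_card_fpf[of "C - F" "\<lambda>x. inv x"])
    show "finite (C - F)" using finC by simp
    fix x assume x: "x \<in> C - F"
    then have xc: "x \<in> carrier G" "x \<otimes> a = a \<otimes> x" "x \<otimes> x \<noteq> \<one>" using C_def F_def by auto
    have e1: "inv x \<otimes> (x \<otimes> a) \<otimes> inv x = a \<otimes> inv x" using xc(1) ac by (simp add: m_assoc[symmetric])
    have e2: "inv x \<otimes> (a \<otimes> x) \<otimes> inv x = inv x \<otimes> a" using xc(1) ac by (simp add: m_assoc)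
    have "inv x \<otimes> (x \<otimes> a) \<otimes> inv x = inv x \<otimes> (a \<otimes> x) \<otimes> inv x" using xc(2) by simp
    then have c: "inv x \<otimes> a = a \<otimes> inv x" using e1 e2 by simp
    have "inv x \<otimes> inv x \<noteq> \<one>"
    proof
      assume "inv x \<otimes> inv x = \<one>"
      then have "inv (x \<otimes> x) = \<one>" using xc by (simp add: inv_mult_group)
      then have "x \<otimes> x = \<one>" using xc by (metis inv_inv m_closed inv_one)
      then show False using xc by simp
    qed
    then show "inv x \<in> C - F" using c xc C_def F_def by auto
    show "inv (inv x) = x" using xc by simp
    show "inv x \<noteq> x"
    proof
      assume "inv x = x"
      then have "x \<otimes> x = \<one>" using xc by (metis r_inv)
      then show False using xc by simp
    qed
  qed
  have "F \<subseteq> C" using F_def by auto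
  then have "card C = card F + card (C - F)" using finC
    by (metis card_Diff_subset card_mono finite_subset le_add_diff_inverse)
  then show False using evC evCF cF cIX evX by simp
qed

end

theorem theorem3p4:
  fixes G :: "('a, 'b) monoid_scheme"
  assumes "group G"
    and "finite (carrier G)"
    and "element_orders G \<subseteq> {1, 2, 3, 4, 6}"
  shows "\<not> (\<exists>H1 H2 H3 H4.
            {H. cyclic_subgroup G H \<and> card H = 6} = {H1, H2, H3, H4}
          \<and> card {H1, H2, H3, H4} = 4
          \<and> card (H1 \<inter> H2) = 3 \<and> card (H3 \<inter> H4) = 3)"
proof (rule notI, elim exE conjE)
  fix H1 H2 H3 H4
  assume "{H. cyclic_subgroup G H \<and> card H = 6} = {H1, H2, H3, H4}"
    "card {H1, H2, H3, H4} = 4" "card (H1 \<inter> H2) = 3" "card (H3 \<inter> H4) = 3"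
  then show False by (rule group.main_false[OF assms(1,2)])
qed

end
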